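(* Let $p$ be a prime and let $G$ be a $2$-tuple regular finite group of exponent $p^s$ for some $s\in\mathbb{N}$. For all $i,j\in\{1,\ldots,s\}$, the subgroup $[\Omega_i(G),\Omega_j(G)]$ is a union of order classes of $G$.
   Context: $\Omega_i(G)$ is the subgroup generated by all elements of order dividing $p^i$; $[A,B]=\langle aba^{-1}b^{-1}: a\in A,b\in B\rangle$. A subgroup $N$ of $G$ is a union of order classes if for every $n\in\mathbb{N}$ it contains either all or none of the elements of order $n$ of $G$. A finite group $G$ is $2$-tuple regular if for all pairs $(g_1,g_2),(h_1,h_2)\in G^2$ (entries may coincide) for which $g_1\mapsto h_1,g_2\mapsto h_2$ defines an isomorphism $\langle g_1,g_2\rangle\to\langle h_1,h_2\rangle$, there is a bijection $\Psi\colon G\to G$ such that for every $g\in G$ the assignment $g_1\mapsto h_1,g_2\mapsto h_2,g\mapsto\Psi(g)$ defines an isomorphism $\langle g_1,g_2,g\rangle\to\langle h_1,h_2,\Psi(g)\rangle$. *)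

theory Defs
  imports "HOL-Algebra.Algebra"
begin

definition group_exponent :: "('a, 'b) monoid_scheme \<Rightarrow> nat" where
  "group_exponent G = Lcm (group.ord G ` carrier G)"

definition Omega :: "('a, 'b) monoid_scheme \<Rightarrow> nat \<Rightarrow> nat \<Rightarrow> 'a set" where
  "Omega G p i = generate G {x \<in> carrier G. group.ord G x dvd p ^ i}"

definition comm_subgroup :: "('a, 'b) monoid_scheme \<Rightarrow> 'a set \<Rightarrow> 'a set \<Rightarrow> 'a set" where
  "comm_subgroup G A B =
     generate G {a \<otimes>\<^bsub>G\<^esub> b \<otimes>\<^bsub>G\<^esub> inv\<^bsub>G\<^esub> a \<otimes>\<^bsub>G\<^esub> inv\<^bsub>G\<^esub> b | a b. a \<in> A \<and> b \<in> B}"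

definition union_of_order_classes :: "('a, 'b) monoid_scheme \<Rightarrow> 'a set \<Rightarrow> bool" where
  "union_of_order_classes G N \<longleftrightarrow>
     (\<forall>n::nat. (\<forall>x\<in>carrier G. group.ord G x = n \<longrightarrow> x \<in> N) \<or>
               (\<forall>x\<in>carrier G. group.ord G x = n \<longrightarrow> x \<notin> N))"

definition defines_iso :: "('a, 'b) monoid_scheme \<Rightarrow> 'a list \<Rightarrow> 'a list \<Rightarrow> bool" where
  "defines_iso G gs hs \<longleftrightarrow>
     (\<exists>\<phi> \<in> iso (subgroup_generated G (set gs)) (subgroup_generated G (set hs)).
        list_all2 (\<lambda>g h. \<phi> g = h) gs hs)"

definition two_tuple_regular :: "('a, 'b) monoid_scheme \<Rightarrow> bool" where
  "two_tuple_regular G \<longleftrightarrow>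
     (\<forall>g1\<in>carrier G. \<forall>g2\<in>carrier G. \<forall>h1\<in>carrier G. \<forall>h2\<in>carrier G.
        defines_iso G [g1, g2] [h1, h2] \<longrightarrow>
        (\<exists>\<Psi>. bij_betw \<Psi> (carrier G) (carrier G) \<and>
             (\<forall>g\<in>carrier G. defines_iso G [g1, g2, g] [h1, h2, \<Psi> g])))"

end

theory Submission
  imports Defs
begin

lemma ord_sg:
  assumes "group G"
  shows "group.ord (subgroup_generated G S) x = group.ord G x"
  by (simp add: group.ord_def[OF assms] group.ord_def[OF group.group_subgroup_generated[OF assms]]
      pow_subgroup_generated)

lemma iso_ord:
  assumes "\<phi> \<in> iso H K" "group H" "group K" "g \<in> carrier H"
  shows "group.ord K (\<phi> g) = group.ord H g"
proof -
  interpret h: group_hom H K \<phi>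
    using assms by (simp add: group_hom_def group_hom_axioms_def iso_def)
  have inj: "inj_on \<phi> (carrier H)" using assms(1) by (simp add: iso_def bij_betw_def)
  have "\<phi> g \<in> carrier K" using assms by simp
  moreover have "\<forall>n::nat. \<phi> g [^]\<^bsub>K\<^esub> n = \<one>\<^bsub>K\<^esub> \<longleftrightarrow> group.ord H g dvd n"
  proof
    fix n :: nat
    have "\<phi> g [^]\<^bsub>K\<^esub> n = \<phi> (g [^]\<^bsub>H\<^esub> n)" using assms(4) by (simp add: h.hom_nat_pow)
    moreover have "\<one>\<^bsub>K\<^esub> = \<phi> \<one>\<^bsub>H\<^esub>" by simp
    ultimately have "\<phi> g [^]\<^bsub>K\<^esub> n = \<one>\<^bsub>K\<^esub> \<longleftrightarrow> g [^]\<^bsub>H\<^esub> n = \<one>\<^bsub>H\<^esub>"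
      using inj assms(4) by (metis h.G.nat_pow_closed h.G.one_closed inj_on_eq_iff)
    then show "\<phi> g [^]\<^bsub>K\<^esub> n = \<one>\<^bsub>K\<^esub> \<longleftrightarrow> group.ord H g dvd n"
      using group.pow_eq_id[OF assms(2) assms(4)] by simp
  qed
  ultimately show ?thesis using group.ord_unique[OF assms(3)] by blast
qed

lemma cyc_iso:
  fixes G (structure)
  assumes G: "group G" and x: "x \<in> carrier G" and y: "y \<in> carrier G"
    and o: "group.ord G x = group.ord G y"
  shows "\<exists>\<phi>\<in>iso (subgroup_generated G {x}) (subgroup_generated G {y}). \<phi> x = y"
proof -
  interpret group G by (rule G)
  define \<phi> where "\<phi> g = y [^] (SOME n::int. g = x [^] n)" for g
  have eqv: "x [^] (a::int) = x [^] (b::int) \<longleftrightarrow> y [^] a = y [^] b" for a b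
    using int_pow_eq[OF x, of a b] int_pow_eq[OF y, of a b] o by simp
  have key: "\<phi> (x [^] (n::int)) = y [^] n" for n
  proof -
    have "x [^] n = x [^] (SOME m::int. x [^] n = x [^] m)" by (rule someI) (rule refl)
    then show ?thesis unfolding \<phi>_def using eqv by metis
  qed
  have cx: "carrier (subgroup_generated G {x}) = range (\<lambda>n::int. x [^] n)"
    by (rule carrier_subgroup_generated_by_singleton[OF x])
  have cy: "carrier (subgroup_generated G {y}) = range (\<lambda>n::int. y [^] n)"
    by (rule carrier_subgroup_generated_by_singleton[OF y])
  have hom: "\<phi> \<in> hom (subgroup_generated G {x}) (subgroup_generated G {y})"
  proof (rule homI)
    fix g assume "g \<in> carrier (subgroup_generated G {x})"
    then obtain n where "g = x [^] (n::int)" using cx by auto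
    then show "\<phi> g \<in> carrier (subgroup_generated G {y})" using key cy by auto
  next
    fix g h assume "g \<in> carrier (subgroup_generated G {x})" "h \<in> carrier (subgroup_generated G {x})"
    then obtain n m where "g = x [^] (n::int)" "h = x [^] (m::int)" using cx by auto
    then show "\<phi> (g \<otimes>\<^bsub>subgroup_generated G {x}\<^esub> h) = \<phi> g \<otimes>\<^bsub>subgroup_generated G {y}\<^esub> \<phi> h"
      using key[of "n+m"] key[of n] key[of m] x y by (simp add: int_pow_mult)
  qed
  have bij: "bij_betw \<phi> (carrier (subgroup_generated G {x})) (carrier (subgroup_generated G {y}))"
    unfolding bij_betw_def
  proof
    show "inj_on \<phi> (carrier (subgroup_generated G {x}))"
      unfolding cx inj_on_def using key eqv by auto
    show "\<phi> ` carrier (subgroup_generated G {x}) = carrier (subgroup_generated G {y})"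
      unfolding cx cy using key by (auto simp: image_iff)
  qed
  have "\<phi> x = y" using key[of 1] x y by simp
  then show ?thesis using hom bij by (auto simp: iso_def)
qed

lemma in_sg:
  assumes "a \<in> carrier G" "a \<in> A"
  shows "a \<in> carrier (subgroup_generated G A)"
  using assms by (simp add: carrier_subgroup_generated generate.incl)

lemma iso_ops:
  assumes G: "group G" and \<phi>: "\<phi> \<in> iso (subgroup_generated G A) (subgroup_generated G B)"
    and a: "a \<in> carrier (subgroup_generated G A)" and b: "b \<in> carrier (subgroup_generated G A)"
  shows "\<phi> (a \<otimes>\<^bsub>G\<^esub> b) = \<phi> a \<otimes>\<^bsub>G\<^esub> \<phi> b"
    and "\<phi> (inv\<^bsub>G\<^esub> a) = inv\<^bsub>G\<^esub> (\<phi> a)"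
    and "inv\<^bsub>G\<^esub> a \<in> carrier (subgroup_generated G A)"
    and "a \<otimes>\<^bsub>G\<^esub> b \<in> carrier (subgroup_generated G A)"
    and "\<phi> a \<in> carrier (subgroup_generated G B)"
    and "group.ord G (\<phi> a) = group.ord G a"
proof -
  interpret h: group_hom "subgroup_generated G A" "subgroup_generated G B" \<phi>
    using \<phi> G by (simp add: group_hom_def group_hom_axioms_def iso_def group.group_subgroup_generated)
  show "\<phi> (a \<otimes>\<^bsub>G\<^esub> b) = \<phi> a \<otimes>\<^bsub>G\<^esub> \<phi> b" using h.hom_mult[OF a b] by simp
  show "\<phi> (inv\<^bsub>G\<^esub> a) = inv\<^bsub>G\<^esub> (\<phi> a)" using h.hom_inv[OF a] a
    by (simp add: group.inv_subgroup_generated[OF G])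
  show "inv\<^bsub>G\<^esub> a \<in> carrier (subgroup_generated G A)"
    using h.G.inv_closed[OF a] a by (simp add: group.inv_subgroup_generated[OF G])
  show "a \<otimes>\<^bsub>G\<^esub> b \<in> carrier (subgroup_generated G A)"
    using h.G.m_closed[OF a b] by simp
  show "\<phi> a \<in> carrier (subgroup_generated G B)" using a by simp
  show "group.ord G (\<phi> a) = group.ord G a"
    using iso_ord[OF \<phi> h.G.is_group h.H.is_group a] ord_sg[OF G] by simp
qed

lemma reg1:
  assumes G: "group G" and T: "two_tuple_regular G"
    and x: "x \<in> carrier G" and y: "y \<in> carrier G" and o: "group.ord G x = group.ord G y"
  shows "\<exists>\<Psi>. \<forall>g\<in>carrier G. \<Psi> g \<in> carrier G \<and>
     (\<exists>\<phi>\<in>iso (subgroup_generated G {x,g}) (subgroup_generated G {y,\<Psi> g}). \<phi> x = y \<and> \<phi> g = \<Psi> g)"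
proof -
  obtain \<phi> where "\<phi>\<in>iso (subgroup_generated G {x}) (subgroup_generated G {y})" "\<phi> x = y"
    using cyc_iso[OF G x y o] by blast
  then have "defines_iso G [x,x] [y,y]" unfolding defines_iso_def by auto
  then obtain \<Psi> where bij: "bij_betw \<Psi> (carrier G) (carrier G)"
    and d: "\<forall>g\<in>carrier G. defines_iso G [x, x, g] [y, y, \<Psi> g]"
    using T x y unfolding two_tuple_regular_def by blast
  show ?thesis
  proof (rule exI[of _ \<Psi>], intro ballI conjI)
    fix g assume g: "g \<in> carrier G"
    show "\<Psi> g \<in> carrier G" using bij g by (auto simp: bij_betw_def)
    show "\<exists>\<phi>\<in>iso (subgroup_generated G {x,g}) (subgroup_generated G {y,\<Psi> g}). \<phi> x = y \<and> \<phi> g = \<Psi> g"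
      using d g unfolding defines_iso_def by auto
  qed
qed

lemma gen_closed:
  fixes G (structure)
  assumes G: "group G"
    and R: "\<forall>x\<in>carrier G. \<forall>y\<in>carrier G. group.ord G x = group.ord G y \<longrightarrow> (\<forall>g\<in>carrier G. \<exists>g'\<in>carrier G.
         \<exists>\<phi>\<in>iso (subgroup_generated G {x,g}) (subgroup_generated G {y,g'}). \<phi> x = y \<and> \<phi> g = g')"
    and S: "S \<subseteq> carrier G" and cl: "\<forall>x\<in>S. \<forall>y\<in>carrier G. group.ord G y = group.ord G x \<longrightarrow> y \<in> S"
    and h: "x \<in> generate G S"
  shows "\<forall>y\<in>carrier G. group.ord G y = group.ord G x \<longrightarrow> y \<in> generate G S"
proof -
  interpret group G by (rule G)
  have gc: "generate G S \<subseteq> carrier G" using generate_in_carrier[OF S] by blast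
  show ?thesis using h
  proof induction
    case one
    show ?case
    proof (intro ballI impI)
      fix y assume "y \<in> carrier G" "ord y = ord \<one>"
      then have "y = \<one>" using ord_eq_1[of y] by simp
      then show "y \<in> generate G S" by (simp add: generate.one)
    qed
  next
    case (incl h)
    show ?case
    proof (intro ballI impI)
      fix y assume y: "y \<in> carrier G" "ord y = ord h"
      have "y \<in> S" using cl[rule_format, OF incl.hyps y] .
      then show "y \<in> generate G S" by (rule generate.incl)
    qed
  next
    case (inv h)
    show ?case
    proof (intro ballI impI)
      fix y assume y: "y \<in> carrier G" "ord y = ord (inv h)"
      have hc: "h \<in> carrier G" using inv S by auto
      have o: "ord (inv y) = ord h" using y hc by simp
      have "inv y \<in> S" using cl[rule_format, OF inv.hyps inv_closed[OF y(1)] o] .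
      then have "inv (inv y) \<in> generate G S" by (rule generate.inv)
      then show "y \<in> generate G S" using y by simp
    qed
  next
    case (eng h1 h2)
    have h1: "h1 \<in> carrier G" and h2: "h2 \<in> carrier G" using eng gc by auto
    show ?case
    proof (intro ballI impI)
      fix y assume y: "y \<in> carrier G" "ord y = ord (h1 \<otimes> h2)"
      have xc: "h1 \<otimes> h2 \<in> carrier G" using h1 h2 by simp
      obtain g' \<phi> where g': "g' \<in> carrier G"
        and \<phi>: "\<phi>\<in>iso (subgroup_generated G {h1 \<otimes> h2,h1}) (subgroup_generated G {y,g'})"
        and e: "\<phi> (h1 \<otimes> h2) = y" "\<phi> h1 = g'"
        using R[rule_format, OF xc y(1) y(2)[symmetric] h1] by blast
      have a: "h1 \<otimes> h2 \<in> carrier (subgroup_generated G {h1 \<otimes> h2,h1})" using xc by (simp add: in_sg)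
      have b: "h1 \<in> carrier (subgroup_generated G {h1 \<otimes> h2,h1})" using h1 by (simp add: in_sg)
      have h2eq: "h2 = inv h1 \<otimes> (h1 \<otimes> h2)" using h1 h2 by (simp add: m_assoc[symmetric])
      have ib: "inv h1 \<in> carrier (subgroup_generated G {h1 \<otimes> h2,h1})" using iso_ops(3)[OF G \<phi> b b] .
      have p: "inv h1 \<otimes> (h1 \<otimes> h2) \<in> carrier (subgroup_generated G {h1 \<otimes> h2,h1})"
        using iso_ops(4)[OF G \<phi> ib a] .
      have "\<phi> (inv h1 \<otimes> (h1 \<otimes> h2)) = inv g' \<otimes> y"
        using iso_ops(1)[OF G \<phi> ib a] iso_ops(2)[OF G \<phi> b b] e by simp
      moreover have "ord (\<phi> (inv h1 \<otimes> (h1 \<otimes> h2))) = ord h2"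
        using iso_ops(6)[OF G \<phi> p b] arg_cong[OF h2eq[symmetric], of ord] by (rule trans)
      ultimately have o2: "ord (inv g' \<otimes> y) = ord h2" by simp
      have i1: "inv g' \<otimes> y \<in> generate G S"
        using eng.IH(2)[rule_format, OF _ o2] g' y by simp
      have "ord g' = ord h1" using iso_ops(6)[OF G \<phi> b b] e(2) by simp
      then have i2: "g' \<in> generate G S" using eng.IH(1)[rule_format, OF g'] by simp
      have "g' \<otimes> (inv g' \<otimes> y) \<in> generate G S" using i2 i1 by (rule generate.eng)
      then show "y \<in> generate G S" using g' y by (simp add: m_assoc[symmetric])
    qed
  qed
qed

lemma reg1':
  assumes G: "group G" and T: "two_tuple_regular G"
  shows "\<forall>x\<in>carrier G. \<forall>y\<in>carrier G. group.ord G x = group.ord G y \<longrightarrow> (\<forall>g\<in>carrier G. \<exists>g'\<in>carrier G.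
         \<exists>\<phi>\<in>iso (subgroup_generated G {x,g}) (subgroup_generated G {y,g'}). \<phi> x = y \<and> \<phi> g = g')"
proof (intro ballI impI)
  fix x y g assume x: "x \<in> carrier G" and y: "y \<in> carrier G" and o: "group.ord G x = group.ord G y"
    and g: "g \<in> carrier G"
  obtain \<Psi> where "\<forall>g\<in>carrier G. \<Psi> g \<in> carrier G \<and>
     (\<exists>\<phi>\<in>iso (subgroup_generated G {x,g}) (subgroup_generated G {y,\<Psi> g}). \<phi> x = y \<and> \<phi> g = \<Psi> g)"
    using reg1[OF G T x y o] by blast
  then show "\<exists>g'\<in>carrier G. \<exists>\<phi>\<in>iso (subgroup_generated G {x,g}) (subgroup_generated G {y,g'}). \<phi> x = y \<and> \<phi> g = g'"
    using g by blast
qed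

lemma closed_uoc:
  assumes "N \<subseteq> carrier G" and "\<forall>x\<in>N. \<forall>y\<in>carrier G. group.ord G y = group.ord G x \<longrightarrow> y \<in> N"
  shows "union_of_order_classes G N"
  unfolding union_of_order_classes_def
proof
  fix n :: nat
  show "(\<forall>x\<in>carrier G. group.ord G x = n \<longrightarrow> x \<in> N) \<or> (\<forall>x\<in>carrier G. group.ord G x = n \<longrightarrow> x \<notin> N)"
  proof (cases "\<exists>x\<in>N. group.ord G x = n")
    case True
    then obtain x where "x \<in> N" "group.ord G x = n" by blast
    then show ?thesis using assms(2) by auto
  next
    case False
    then show ?thesis by auto
  qed
qed

lemma main_aux:
  fixes G (structure) and p i j :: nat
  assumes G: "group G" and T: "two_tuple_regular G"
  shows "union_of_order_classes G (comm_subgroup G (Omega G p i) (Omega G p j))"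
proof -
  interpret group G by (rule G)
  have R: "\<forall>x\<in>carrier G. \<forall>y\<in>carrier G. ord x = ord y \<longrightarrow> (\<forall>g\<in>carrier G. \<exists>g'\<in>carrier G.
         \<exists>\<phi>\<in>iso (subgroup_generated G {x,g}) (subgroup_generated G {y,g'}). \<phi> x = y \<and> \<phi> g = g')"
    using reg1'[OF G T] .
  have Om: "Omega G p k \<subseteq> carrier G \<and> (\<forall>x\<in>Omega G p k. \<forall>y\<in>carrier G. ord y = ord x \<longrightarrow> y \<in> Omega G p k)" for k
  proof -
    let ?A = "{x \<in> carrier G. ord x dvd p ^ k}"
    have A: "?A \<subseteq> carrier G" by blast
    have cl: "\<forall>x\<in>?A. \<forall>y\<in>carrier G. ord y = ord x \<longrightarrow> y \<in> ?A" by auto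
    show ?thesis unfolding Omega_def
      using gen_closed[OF G R A cl] generate_in_carrier[OF A] by blast
  qed
  define Sc where "Sc = {a \<otimes> b \<otimes> inv a \<otimes> inv b | a b. a \<in> Omega G p i \<and> b \<in> Omega G p j}"
  have Sc: "Sc \<subseteq> carrier G"
  proof
    fix x assume "x \<in> Sc"
    then obtain a b where ab: "a \<in> Omega G p i" "b \<in> Omega G p j" and xe: "x = a \<otimes> b \<otimes> inv a \<otimes> inv b"
      unfolding Sc_def by blast
    have "a \<in> carrier G" "b \<in> carrier G" using ab Om[of i] Om[of j] by auto
    then show "x \<in> carrier G" using xe by simp
  qed
  have clS: "\<forall>x\<in>Sc. \<forall>y\<in>carrier G. ord y = ord x \<longrightarrow> y \<in> Sc"
  proof (intro ballI impI)
    fix x y assume x: "x \<in> Sc" and y: "y \<in> carrier G" and o: "ord y = ord x"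
    then obtain a b where ab: "a \<in> Omega G p i" "b \<in> Omega G p j" and xe: "x = a \<otimes> b \<otimes> inv a \<otimes> inv b"
      unfolding Sc_def by blast
    have a: "a \<in> carrier G" and b: "b \<in> carrier G" using ab Om by auto
    have xc: "x \<in> carrier G" using xe a b by simp
    obtain a' \<phi>1 where a': "a' \<in> carrier G"
      and \<phi>1: "\<phi>1\<in>iso (subgroup_generated G {x,a}) (subgroup_generated G {y,a'})"
      and e1: "\<phi>1 x = y" "\<phi>1 a = a'"
      using R[rule_format, OF xc y o[symmetric] a] by blast
    have "defines_iso G [x,a] [y,a']" unfolding defines_iso_def using \<phi>1 e1 by auto
    then obtain \<Psi> where bij: "bij_betw \<Psi> (carrier G) (carrier G)"
      and d: "\<forall>g\<in>carrier G. defines_iso G [x, a, g] [y, a', \<Psi> g]"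
      using T xc y a a' unfolding two_tuple_regular_def by blast
    define b' where "b' = \<Psi> b"
    have b': "b' \<in> carrier G" using bij b unfolding b'_def by (auto simp: bij_betw_def)
    obtain \<phi> where \<phi>: "\<phi>\<in>iso (subgroup_generated G {x,a,b}) (subgroup_generated G {y,a',b'})"
      and e: "\<phi> x = y" "\<phi> a = a'" "\<phi> b = b'"
      using d b unfolding defines_iso_def b'_def by auto
    have ac: "a \<in> carrier (subgroup_generated G {x,a,b})" using a by (simp add: in_sg)
    have bc: "b \<in> carrier (subgroup_generated G {x,a,b})" using b by (simp add: in_sg)
    have ia: "inv a \<in> carrier (subgroup_generated G {x,a,b})" by (rule iso_ops(3)[OF G \<phi> ac ac])
    have ib: "inv b \<in> carrier (subgroup_generated G {x,a,b})" by (rule iso_ops(3)[OF G \<phi> bc bc])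
    have c1: "a \<otimes> b \<in> carrier (subgroup_generated G {x,a,b})" by (rule iso_ops(4)[OF G \<phi> ac bc])
    have c2: "a \<otimes> b \<otimes> inv a \<in> carrier (subgroup_generated G {x,a,b})" by (rule iso_ops(4)[OF G \<phi> c1 ia])
    have "\<phi> x = \<phi> (a \<otimes> b \<otimes> inv a) \<otimes> \<phi> (inv b)" unfolding xe by (rule iso_ops(1)[OF G \<phi> c2 ib])
    also have "\<phi> (a \<otimes> b \<otimes> inv a) = \<phi> (a \<otimes> b) \<otimes> \<phi> (inv a)" by (rule iso_ops(1)[OF G \<phi> c1 ia])
    also have "\<phi> (a \<otimes> b) = \<phi> a \<otimes> \<phi> b" by (rule iso_ops(1)[OF G \<phi> ac bc])
    also have "\<phi> (inv a) = inv (\<phi> a)" by (rule iso_ops(2)[OF G \<phi> ac ac])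
    also have "\<phi> (inv b) = inv (\<phi> b)" by (rule iso_ops(2)[OF G \<phi> bc bc])
    finally have ye: "y = a' \<otimes> b' \<otimes> inv a' \<otimes> inv b'" using e by simp
    have "ord a' = ord a" using iso_ops(6)[OF G \<phi> ac ac] e by simp
    then have a'O: "a' \<in> Omega G p i" using Om[of i] ab(1) a' by blast
    have "ord b' = ord b" using iso_ops(6)[OF G \<phi> bc bc] e by simp
    then have b'O: "b' \<in> Omega G p j" using Om[of j] ab(2) b' by blast
    show "y \<in> Sc" unfolding Sc_def using ye a'O b'O by blast
  qed
  have N: "comm_subgroup G (Omega G p i) (Omega G p j) = generate G Sc"
    unfolding comm_subgroup_def Sc_def by simp
  have sub: "generate G Sc \<subseteq> carrier G" using generate_in_carrier[OF Sc] by blast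
  have "\<forall>x\<in>generate G Sc. \<forall>y\<in>carrier G. ord y = ord x \<longrightarrow> y \<in> generate G Sc"
    using gen_closed[OF G R Sc clS] by blast
  then show ?thesis unfolding N by (rule closed_uoc[OF sub])
qed

theorem lemma4p6:
  fixes G :: "('a, 'b) monoid_scheme" and p s i j :: nat
  assumes "group G" and "finite (carrier G)"
    and "Factorial_Ring.prime p"
    and "two_tuple_regular G"
    and "group_exponent G = p ^ s"
    and "i \<in> {1..s}" and "j \<in> {1..s}"
  shows "union_of_order_classes G (comm_subgroup G (Omega G p i) (Omega G p j))"
  using main_aux assms by blast

end
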